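(* Consider the following four conditions, each required for all $0\le i,j\le d$: (C1) $E^*_iAE^*_j=0$ if $i-j>1$, and $E^*_iAE^*_j\ne0$ if $i-j=1$; (C2) $E^*_iAE^*_j=0$ if $j-i>1$, and $E^*_iAE^*_j\ne0$ if $j-i=1$; (C3) $E_iA^*E_j=0$ if $i-j>1$, and $E_iA^*E_j\ne0$ if $i-j=1$; (C4) $E_iA^*E_j=0$ if $j-i>1$, and $E_iA^*E_j\ne0$ if $j-i=1$. If at least three of (C1)–(C4) hold, then all four hold; that is, $(A;A^*;\{E_i\}_{i=0}^d;\{E^*_i\}_{i=0}^d)$ is a Leonard system.
   Context: Let $\mathbb K$ be a field, $d\ge 0$ an integer, and $\mathcal A$ a $\mathbb K$-algebra isomorphic to $\mathrm{Mat}_{d+1}(\mathbb K)$, with identity $I$. An element of $\mathcal A$ is multiplicity-free if it has $d+1$ mutually distinct eigenvalues, all in $\mathbb K$; for such $A$ with eigenvalues $\theta_0,\ldots,\theta_d$, the primitive idempotent associated with $\theta_i$ is $E_i=\prod_{j\ne i}(A-\theta_jI)/(\theta_i-\theta_j)$. Standing setup: $A,A^*$ are multiplicity-free elements of $\mathcal A$ ($A^*$ is just a name, not an adjoint); $E_0,\ldots,E_d$ is an ordering of the primitive idempotents of $A$; $E^*_0,\ldots,E^*_d$ is an ordering of the primitive idempotents of $A^*$. The sequence $(A;A^*;\{E_i\};\{E^*_i\})$ is a Leonard system if for all $0\le i,j\le d$: $E^*_iAE^*_j=0$ if $|i-j|>1$, $E^*_iAE^*_j\ne0$ if $|i-j|=1$,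 $E_iA^*E_j=0$ if $|i-j|>1$, and $E_iA^*E_j\ne0$ if $|i-j|=1$. *)

theory Defs
  imports "HOL-Analysis.Analysis"
begin

text \<open>The algebra isomorphic to Mat_{d+1}(K) is modelled by the matrix algebra
  'a^'n^'n over a field 'a, with d + 1 = CARD('n).  The identity is mat 1.\<close>

text \<open>theta enumerates d+1 mutually distinct eigenvalues (in K) of A, indexed 0..d.
  Such an enumeration exists iff A is multiplicity-free.\<close>
definition eigenvalue_enum :: "('a::field)^'n^'n \<Rightarrow> (nat \<Rightarrow> 'a) \<Rightarrow> bool" where
  "eigenvalue_enum A \<theta> \<longleftrightarrow> inj_on \<theta> {..<CARD('n)} \<and>
     (\<forall>i<CARD('n). \<exists>v. v \<noteq> 0 \<and> A *v v = \<theta> i *s v)"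

definition multiplicity_free :: "('a::field)^'n^'n \<Rightarrow> bool" where
  "multiplicity_free A \<longleftrightarrow> (\<exists>\<theta>. eigenvalue_enum A \<theta>)"

definition prim_idem :: "('a::field)^'n^'n \<Rightarrow> (nat \<Rightarrow> 'a) \<Rightarrow> nat \<Rightarrow> 'a^'n^'n" where
  "prim_idem A \<theta> i =
     foldr (\<lambda>j M. (mat (1 / (\<theta> i - \<theta> j)) ** (A - mat (\<theta> j))) ** M)
           (filter (\<lambda>j. j \<noteq> i) [0..<CARD('n)]) (mat 1)"

definition idem_ordering :: "('a::field)^'n^'n \<Rightarrow> (nat \<Rightarrow> 'a^'n^'n) \<Rightarrow> bool" where
  "idem_ordering A E \<longleftrightarrow>
     (\<exists>\<theta>. eigenvalue_enum A \<theta> \<and> (\<forall>i<CARD('n). E i = prim_idem A \<theta> i))"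

definition lower_cond :: "(nat \<Rightarrow> ('a::field)^'n^'n) \<Rightarrow> 'a^'n^'n \<Rightarrow> bool" where
  "lower_cond E M \<longleftrightarrow> (\<forall>i<CARD('n). \<forall>j<CARD('n).
     (i > j + 1 \<longrightarrow> E i ** M ** E j = 0) \<and> (i = j + 1 \<longrightarrow> E i ** M ** E j \<noteq> 0))"

definition upper_cond :: "(nat \<Rightarrow> ('a::field)^'n^'n) \<Rightarrow> 'a^'n^'n \<Rightarrow> bool" where
  "upper_cond E M \<longleftrightarrow> (\<forall>i<CARD('n). \<forall>j<CARD('n).
     (j > i + 1 \<longrightarrow> E i ** M ** E j = 0) \<and> (j = i + 1 \<longrightarrow> E i ** M ** E j \<noteq> 0))"

definition leonard_system ::
  "('a::field)^'n^'n \<Rightarrow> 'a^'n^'n \<Rightarrow> (nat \<Rightarrow> 'a^'n^'n) \<Rightarrow> (nat \<Rightarrow> 'a^'n^'n) \<Rightarrow> bool" where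
  "leonard_system A As E Es \<longleftrightarrow>
     multiplicity_free A \<and> multiplicity_free As \<and> idem_ordering A E \<and> idem_ordering As Es \<and>
     (\<forall>i<CARD('n). \<forall>j<CARD('n).
        (((i > j + 1) \<or> (j > i + 1)) \<longrightarrow> Es i ** A ** Es j = 0) \<and>
        (((i = j + 1) \<or> (j = i + 1)) \<longrightarrow> Es i ** A ** Es j \<noteq> 0) \<and>
        (((i > j + 1) \<or> (j > i + 1)) \<longrightarrow> E i ** As ** E j = 0) \<and>
        (((i = j + 1) \<or> (j = i + 1)) \<longrightarrow> E i ** As ** E j \<noteq> 0))"

end

theory Submission
  imports Defs
begin


lemma mat_mult_vec: "(mat c :: 'a::field^'n^'n) *v x = c *s x"
  by (simp add: vec_eq_iff matrix_vector_mult_def mat_def if_distrib if_distribR cong del: if_weak_cong)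

lemma foldr_apply:
  fixes A :: "'a::field^'n^'n"
  assumes "A *v w = t *s w"
  shows "foldr (\<lambda>j M. (mat (c j) ** (A - mat (\<theta> j))) ** M) L (mat 1) *v w
         = (\<Prod>j\<leftarrow>L. c j * (t - \<theta> j)) *s w"
proof (induction L)
  case Nil then show ?case by simp
next
  case (Cons a L)
  show ?case
    by (simp add: matrix_vector_mul_assoc[symmetric] Cons mat_mult_vec
        matrix_vector_mult_diff_rdistrib vec.scale assms algebra_simps)
qed



lemma prod_list_one: "(\<forall>x\<in>set L. f x = (1::'a::comm_monoid_mult)) \<Longrightarrow> (\<Prod>x\<leftarrow>L. f x) = 1"
  by (induction L) auto

lemma prod_list_zero: "x\<in>set L \<Longrightarrow> f x = (0::'a::comm_semiring_1) \<Longrightarrow> (\<Prod>x\<leftarrow>L. f x) = 0"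
  by (induction L) auto

lemma prim_idem_apply:
  fixes A :: "'a::field^'n^'n"
  assumes enum: "eigenvalue_enum A \<theta>" and i: "i < CARD('n)" and k: "k < CARD('n)"
    and w: "A *v w = \<theta> k *s w"
  shows "prim_idem A \<theta> i *v w = (if k = i then w else 0)"
proof -
  have inj: "inj_on \<theta> {..<CARD('n)}" using enum unfolding eigenvalue_enum_def by blast
  have "prim_idem A \<theta> i *v w = (\<Prod>j\<leftarrow>filter (\<lambda>j. j \<noteq> i) [0..<CARD('n)].
           (1 / (\<theta> i - \<theta> j)) * (\<theta> k - \<theta> j)) *s w"
    unfolding prim_idem_def by (rule foldr_apply[OF w])
  also have "\<dots> = (if k = i then w else 0)"
  proof (cases "k = i")
    case True
    have "\<forall>j\<in>set (filter (\<lambda>j. j \<noteq> i) [0..<CARD('n)]). (1 / (\<theta> i - \<theta> j)) * (\<theta> k - \<theta> j) = 1"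
    proof
      fix j assume "j \<in> set (filter (\<lambda>j. j \<noteq> i) [0..<CARD('n)])"
      then have "j < CARD('n)" "j \<noteq> i" by auto
      then have "\<theta> i \<noteq> \<theta> j" using inj i unfolding inj_on_def by blast
      then show "(1 / (\<theta> i - \<theta> j)) * (\<theta> k - \<theta> j) = 1" using True by simp
    qed
    then show ?thesis using True by (simp add: prod_list_one)
  next
    case False
    have "k \<in> set (filter (\<lambda>j. j \<noteq> i) [0..<CARD('n)])" using False k by auto
    then show ?thesis using False
      by (subst prod_list_zero[where x=k]) auto
  qed
  finally show ?thesis .
qed

locale coordsys =
  fixes M :: "'a::field^'n^'n" and \<theta> :: "nat \<Rightarrow> 'a" and E :: "nat \<Rightarrow> 'a^'n^'n" and u :: "nat \<Rightarrow> 'a^'n"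
  assumes enum: "eigenvalue_enum M \<theta>"
    and E: "\<And>i. i < CARD('n) \<Longrightarrow> E i = prim_idem M \<theta> i"
    and unz: "\<And>i. i < CARD('n) \<Longrightarrow> u i \<noteq> 0"
    and ueig: "\<And>i. i < CARD('n) \<Longrightarrow> M *v u i = \<theta> i *s u i"
begin


lemma E_u: "i < CARD('n) \<Longrightarrow> k < CARD('n) \<Longrightarrow> E i *v u k = (if k = i then u k else 0)"
  using prim_idem_apply[OF enum _ _ ueig] E by simp

lemma inj_theta: "inj_on \<theta> {..<CARD('n)}" using enum unfolding eigenvalue_enum_def by blast

lemma inj_u: "inj_on u {..<CARD('n)}"
proof (rule inj_onI)
  fix i k assume i: "i \<in> {..<CARD('n)}" and k: "k \<in> {..<CARD('n)}" and eq: "u i = u k"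
  show "i = k"
  proof (rule ccontr)
    assume "i \<noteq> k"
    then have "E i *v u k = 0" using E_u i k by simp
    moreover have "E i *v u i = u i" using E_u i by simp
    ultimately show False using eq unz i by simp
  qed
qed

lemma indep: "vec.independent (u ` {..<CARD('n)})"
proof (rule vec.independent_if_scalars_zero)
  show "finite (u ` {..<CARD('n)})" by simp
  fix f x assume sum: "(\<Sum>x\<in>u ` {..<CARD('n)}. f x *s x) = 0" and x: "x \<in> u ` {..<CARD('n)}"
  then obtain i where i: "i < CARD('n)" and xi: "x = u i" by auto
  have "0 = E i *v (\<Sum>x\<in>u ` {..<CARD('n)}. f x *s x)" using sum by simp
  also have "\<dots> = (\<Sum>x\<in>u ` {..<CARD('n)}. f x *s (E i *v x))"
    by (simp add: vec.linear_sum vec.linear_scale)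
  also have "\<dots> = (\<Sum>k\<in>{..<CARD('n)}. f (u k) *s (E i *v u k))"
    by (simp add: sum.reindex[OF inj_u])
  also have "\<dots> = (\<Sum>k\<in>{..<CARD('n)}. if k = i then f (u i) *s u i else 0)"
    by (rule sum.cong) (use i in \<open>auto simp: E_u\<close>)
  also have "\<dots> = f (u i) *s u i" using i by simp
  finally show "f x = 0" using unz[OF i] xi by simp
qed

lemma span: "vec.span (u ` {..<CARD('n)}) = UNIV"
proof -
  have "card (u ` {..<CARD('n)}) = CARD('n)" using inj_u by (simp add: card_image)
  also have "\<dots> = vec.dim (UNIV :: ('a^'n) set)" by (simp add: card_cart_basis)
  finally have "vec.independent (u ` {..<CARD('n)}) \<longleftrightarrow> UNIV \<subseteq> vec.span (u ` {..<CARD('n)})"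
    by (intro vec.card_eq_dim) auto
  then show ?thesis using indep by auto
qed

lemma decomp0: "\<exists>c. x = (\<Sum>k<CARD('n). c k *s u k)"
proof -
  have "x \<in> vec.span (u ` {..<CARD('n)})" using span by simp
  then obtain g where "x = (\<Sum>v\<in>u ` {..<CARD('n)}. g v *s v)"
    using vec.span_finite[of "u ` {..<CARD('n)}"] by auto
  then have "x = (\<Sum>k<CARD('n). g (u k) *s u k)" by (simp add: sum.reindex[OF inj_u])
  then show ?thesis by (rule exI[of _ "\<lambda>k. g (u k)"])
qed

definition coord :: "nat \<Rightarrow> 'a^'n \<Rightarrow> 'a" where
  "coord k x = (SOME a. E k *v x = a *s u k)"

lemma E_coord: assumes k: "k < CARD('n)" shows "E k *v x = coord k x *s u k"
proof -
  obtain c where x: "x = (\<Sum>j<CARD('n). c j *s u j)" using decomp0 by blast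
  have "E k *v x = (\<Sum>j<CARD('n). c j *s (E k *v u j))"
    by (simp add: x vec.linear_sum vec.linear_scale)
  also have "\<dots> = (\<Sum>j<CARD('n). if j = k then c k *s u k else 0)"
    by (rule sum.cong) (auto simp: E_u k)
  also have "\<dots> = c k *s u k" using k by simp
  finally have "\<exists>a. E k *v x = a *s u k" by blast
  then show ?thesis unfolding coord_def by (rule someI_ex)
qed

lemma coord_unique: "k < CARD('n) \<Longrightarrow> E k *v x = a *s u k \<Longrightarrow> coord k x = a"
  using E_coord[of k x] unz[of k] by simp

lemma decomp: "x = (\<Sum>k<CARD('n). coord k x *s u k)"
proof -
  obtain c where x: "x = (\<Sum>j<CARD('n). c j *s u j)" using decomp0 by blast
  have "(\<Sum>k<CARD('n). coord k x *s u k) = (\<Sum>k<CARD('n). c k *s u k)"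
  proof (rule sum.cong)
    fix k assume k: "k \<in> {..<CARD('n)}"
    have "E k *v x = (\<Sum>j<CARD('n). c j *s (E k *v u j))"
      by (simp add: x vec.linear_sum vec.linear_scale)
    also have "\<dots> = (\<Sum>j<CARD('n). if j = k then c k *s u k else 0)"
      by (rule sum.cong) (use k in \<open>auto simp: E_u\<close>)
    also have "\<dots> = c k *s u k" using k by simp
    finally show "coord k x *s u k = c k *s u k" using coord_unique k by auto
  qed simp
  then show ?thesis using x by simp
qed

lemma coord_sum: "k < CARD('n) \<Longrightarrow> finite J \<Longrightarrow> coord k (\<Sum>j\<in>J. a j *s y j) = (\<Sum>j\<in>J. a j * coord k (y j))"
  by (rule coord_unique)
     (simp_all add: vec.linear_sum vec.linear_scale E_coord vec.scale_sum_left)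

lemma coord_scale: "k < CARD('n) \<Longrightarrow> coord k (a *s y) = a * coord k y"
  by (rule coord_unique) (simp_all add: vec.linear_scale E_coord)

lemma coord_u: "k < CARD('n) \<Longrightarrow> j < CARD('n) \<Longrightarrow> coord k (u j) = (if j = k then 1 else 0)"
  by (rule coord_unique) (auto simp: E_u)

lemma zero_iff:
  assumes i: "i < CARD('n)" and j: "j < CARD('n)"
  shows "E i ** X ** E j = 0 \<longleftrightarrow> coord i (X *v u j) = 0"
proof
  assume "E i ** X ** E j = 0"
  then have "(E i ** X ** E j) *v u j = 0" by simp
  then have "coord i (X *v u j) *s u i = 0"
    by (simp add: matrix_vector_mul_assoc[symmetric] E_u j E_coord i coord_u)
  then show "coord i (X *v u j) = 0" using unz[OF i] by simp
next
  assume h: "coord i (X *v u j) = 0"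
  show "E i ** X ** E j = 0"
    unfolding matrix_eq
  proof
    fix x
    show "(E i ** X ** E j) *v x = 0 *v x"
      by (simp add: matrix_vector_mul_assoc[symmetric] E_coord i j vec.linear_scale h coord_u)
  qed
qed

end



context coordsys begin
lemma coord_M: assumes k: "k < CARD('n)" shows "coord k (M *v x) = \<theta> k * coord k x"
proof -
  have "M *v x = (\<Sum>j<CARD('n). (coord j x * \<theta> j) *s u j)"
    by (subst decomp[of x]) (simp add: vec.linear_sum vec.linear_scale ueig)
  then have "coord k (M *v x) = (\<Sum>j<CARD('n). (coord j x * \<theta> j) * coord k (u j))"
    by (simp add: coord_sum k)
  also have "\<dots> = (\<Sum>j<CARD('n). if j = k then coord k x * \<theta> k else 0)"
    by (rule sum.cong) (auto simp: coord_u k)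
  finally show ?thesis using k by simp
qed
end

fun mseq :: "(nat \<Rightarrow> nat \<Rightarrow> 'a::field) \<Rightarrow> nat \<Rightarrow> 'a" where
  "mseq T 0 = 1"
| "mseq T (Suc i) = mseq T i * T i (Suc i) / T (Suc i) i"

locale cpair = a: coordsys A \<theta> E u + b: coordsys As \<theta>s Es v
  for A :: "'a::field^'n^'n" and \<theta> E u and As :: "'a^'n^'n" and \<theta>s Es v
begin

lemma core:
  assumes tri0: "\<And>i j. i < CARD('n) \<Longrightarrow> j < CARD('n) \<Longrightarrow> (i > j+1 \<or> j > i+1) \<Longrightarrow> b.coord i (A *v v j) = 0"
    and tri1: "\<And>i j. i < CARD('n) \<Longrightarrow> j < CARD('n) \<Longrightarrow> (i = j+1 \<or> j = i+1) \<Longrightarrow> b.coord i (A *v v j) \<noteq> 0"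
    and i: "i < CARD('n)" and j: "j < CARD('n)"
  shows "a.coord i (As *v u j) = 0 \<longleftrightarrow> a.coord j (As *v u i) = 0"
proof -
  define T where "T i j = b.coord i (A *v v j)" for i j
  define P where "P k i = b.coord k (u i)" for k i
  define S where "S l j = a.coord l (As *v u j)" for l j
  define R where "R j l = a.coord j (v l)" for j l
  define m where "m = mseq T"
  define N where "N i j = (\<Sum>k<CARD('n). m k * P k i * P k j)" for i j
  have eq1: "(\<Sum>j<CARD('n). T k j * P j i) = \<theta> i * P k i" if k: "k < CARD('n)" and i: "i < CARD('n)" for k i
  proof -
    have "A *v u i = (\<Sum>j<CARD('n). P j i *s (A *v v j))"
      unfolding P_def by (subst b.decomp[of "u i"]) (simp add: vec.linear_sum vec.linear_scale)
    then have "b.coord k (A *v u i) = (\<Sum>j<CARD('n). P j i * T k j)"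
      by (simp add: b.coord_sum k T_def)
    moreover have "b.coord k (A *v u i) = \<theta> i * P k i"
      by (simp add: a.ueig i b.coord_scale k P_def)
    ultimately show ?thesis by (simp add: mult.commute)
  qed
  have eq3: "\<theta>s k * P k j = (\<Sum>l<CARD('n). S l j * P k l)" if k: "k < CARD('n)" and j: "j < CARD('n)" for k j
  proof -
    have "b.coord k (As *v u j) = \<theta>s k * P k j" by (simp add: b.coord_M k P_def)
    moreover have "As *v u j = (\<Sum>l<CARD('n). S l j *s u l)"
      unfolding S_def by (rule a.decomp)
    ultimately show ?thesis by (simp add: b.coord_sum k P_def)
  qed
  have Rinv: "(\<Sum>j<CARD('n). P k j * R j l) = (if k = l then 1 else 0)"
    if k: "k < CARD('n)" and l: "l < CARD('n)" for k l
  proof -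
    have "v l = (\<Sum>j<CARD('n). R j l *s u j)" unfolding R_def by (rule a.decomp)
    then have "b.coord k (v l) = (\<Sum>j<CARD('n). R j l * P k j)"
      unfolding P_def by (simp add: b.coord_sum k)
    then show ?thesis using b.coord_u[OF k l] by (auto simp: mult.commute split: if_splits)
  qed
  have mnz: "l < CARD('n) \<Longrightarrow> m l \<noteq> 0" for l
  proof (induction l)
    case 0 then show ?case by (simp add: m_def)
  next
    case (Suc l)
    have "T l (Suc l) \<noteq> 0" "T (Suc l) l \<noteq> 0" using tri1 Suc.prems unfolding T_def by auto
    then show ?case using Suc by (simp add: m_def)
  qed
  have symm: "m k * T k l = m l * T l k" if k: "k < CARD('n)" and l: "l < CARD('n)" for k l
  proof -
    consider "k > l + 1 \<or> l > k + 1" | "k = l" | "l = k + 1" | "k = l + 1" by linarith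
    then show ?thesis
    proof cases
      case 1 then show ?thesis using tri0 k l unfolding T_def by auto
    next
      case 2 then show ?thesis by simp
    next
      case 3
      have "T (Suc k) k \<noteq> 0" using tri1 k l 3 unfolding T_def by auto
      then show ?thesis using 3 by (simp add: m_def)
    next
      case 4
      have "T (Suc l) l \<noteq> 0" using tri1 k l 4 unfolding T_def by auto
      then show ?thesis using 4 by (simp add: m_def)
    qed
  qed
  have Noff: "N i j = 0" if i: "i < CARD('n)" and j: "j < CARD('n)" and ij: "i \<noteq> j" for i j
  proof -
    define G where "G = (\<Sum>k<CARD('n). \<Sum>l<CARD('n). (m k * T k l) * P l i * P k j)"
    have "G = (\<Sum>k<CARD('n). m k * (\<Sum>l<CARD('n). T k l * P l i) * P k j)"
      unfolding G_def by (simp add: sum_distrib_left sum_distrib_right mult.assoc)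
    also have "\<dots> = (\<Sum>k<CARD('n). m k * (\<theta> i * P k i) * P k j)"
      by (rule sum.cong) (simp_all add: eq1 i)
    also have "\<dots> = \<theta> i * N i j"
      unfolding N_def by (simp add: sum_distrib_left mult.commute mult.left_commute)
    finally have G1: "G = \<theta> i * N i j" .
    have "G = (\<Sum>k<CARD('n). \<Sum>l<CARD('n). (m l * T l k) * P l i * P k j)"
      unfolding G_def by (intro sum.cong refl) (subst symm, auto)
    also have "\<dots> = (\<Sum>l<CARD('n). \<Sum>k<CARD('n). (m l * T l k) * P l i * P k j)"
      by (rule sum.swap)
    also have "\<dots> = (\<Sum>l<CARD('n). m l * P l i * (\<Sum>k<CARD('n). T l k * P k j))"
      by (simp add: sum_distrib_left mult.commute mult.left_commute)
    also have "\<dots> = (\<Sum>l<CARD('n). m l * P l i * (\<theta> j * P l j))"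
      by (rule sum.cong) (simp_all add: eq1 j)
    also have "\<dots> = \<theta> j * N i j"
      unfolding N_def by (simp add: sum_distrib_left mult.commute mult.left_commute)
    finally have G2: "G = \<theta> j * N i j" .
    have "\<theta> i \<noteq> \<theta> j" using a.inj_theta i j ij unfolding inj_on_def by blast
    then show ?thesis using G1 G2 by simp
  qed
  have Ndiag: "N i i \<noteq> 0" if i: "i < CARD('n)" for i
  proof
    assume N0: "N i i = 0"
    have Nall: "N i j = 0" if "j < CARD('n)" for j using Noff[OF i that] N0 by (cases "i = j") auto
    have Pz: "P l i = 0" if l: "l < CARD('n)" for l
    proof -
      have "0 = (\<Sum>j<CARD('n). N i j * R j l)" by (simp add: Nall)
      also have "\<dots> = (\<Sum>j<CARD('n). \<Sum>k<CARD('n). m k * P k i * (P k j * R j l))"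
        unfolding N_def by (simp add: sum_distrib_right mult.assoc)
      also have "\<dots> = (\<Sum>k<CARD('n). \<Sum>j<CARD('n). m k * P k i * (P k j * R j l))"
        by (rule sum.swap)
      also have "\<dots> = (\<Sum>k<CARD('n). m k * P k i * (\<Sum>j<CARD('n). P k j * R j l))"
        by (simp add: sum_distrib_left)
      also have "\<dots> = (\<Sum>k<CARD('n). if k = l then m l * P l i else 0)"
        by (rule sum.cong) (simp_all add: Rinv l)
      also have "\<dots> = m l * P l i" using l by simp
      finally show ?thesis using mnz[OF l] by simp
    qed
    have "u i = (\<Sum>l<CARD('n). P l i *s v l)" unfolding P_def by (rule b.decomp)
    also have "\<dots> = 0" by (simp add: Pz)
    finally show False using a.unz[OF i] by simp
  qed
  have X: "(\<Sum>k<CARD('n). m k * P k i * \<theta>s k * P k j) = S i j * N i i"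
    if i: "i < CARD('n)" and j: "j < CARD('n)" for i j
  proof -
    have "(\<Sum>k<CARD('n). m k * P k i * \<theta>s k * P k j)
        = (\<Sum>k<CARD('n). m k * P k i * (\<Sum>l<CARD('n). S l j * P k l))"
      by (rule sum.cong) (simp_all add: eq3[symmetric] j mult.assoc)
    also have "\<dots> = (\<Sum>k<CARD('n). \<Sum>l<CARD('n). S l j * (m k * P k i * P k l))"
      by (simp add: sum_distrib_left mult.commute mult.left_commute)
    also have "\<dots> = (\<Sum>l<CARD('n). \<Sum>k<CARD('n). S l j * (m k * P k i * P k l))"
      by (rule sum.swap)
    also have "\<dots> = (\<Sum>l<CARD('n). S l j * N i l)"
      unfolding N_def by (simp add: sum_distrib_left)
    also have "\<dots> = (\<Sum>l<CARD('n). if l = i then S i j * N i i else 0)"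
      by (rule sum.cong) (simp_all add: Noff i)
    also have "\<dots> = S i j * N i i" using i by simp
    finally show ?thesis .
  qed
  have "(\<Sum>k<CARD('n). m k * P k i * \<theta>s k * P k j) = (\<Sum>k<CARD('n). m k * P k j * \<theta>s k * P k i)"
    by (simp add: mult.commute mult.left_commute)
  then have "S i j * N i i = S j i * N j j" using X[OF i j] X[OF j i] by simp
  then show ?thesis using Ndiag[OF i] Ndiag[OF j] unfolding S_def by auto
qed

end



lemma get_coordsys:
  fixes A :: "'a::field^'n^'n"
  assumes "idem_ordering A E"
  shows "\<exists>\<theta> u. coordsys A \<theta> E u"
proof -
  obtain \<theta> where en: "eigenvalue_enum A \<theta>" and E: "\<forall>i<CARD('n). E i = prim_idem A \<theta> i"
    using assms unfolding idem_ordering_def by blast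
  have "\<forall>i. \<exists>w. i < CARD('n) \<longrightarrow> w \<noteq> 0 \<and> A *v w = \<theta> i *s w"
    using en unfolding eigenvalue_enum_def by blast
  then obtain u where u: "\<And>i. i < CARD('n) \<Longrightarrow> u i \<noteq> 0 \<and> A *v u i = \<theta> i *s u i"
    by metis
  have "coordsys A \<theta> E u"
    by unfold_locales (use en E u in auto)
  then show ?thesis by blast
qed

lemma sym_cond:
  fixes A As :: "('a::field)^'n^'n"
    and E Es :: "nat \<Rightarrow> 'a^'n^'n"
  assumes "idem_ordering A E" and "idem_ordering As Es"
    and low: "lower_cond Es A" and up: "upper_cond Es A"
  shows "lower_cond E As \<longleftrightarrow> upper_cond E As"
proof -
  obtain \<theta> u where a: "coordsys A \<theta> E u" using get_coordsys assms(1) by blast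
  obtain \<theta>s v where b: "coordsys As \<theta>s Es v" using get_coordsys assms(2) by blast
  interpret cpair A \<theta> E u As \<theta>s Es v using a b by (simp add: cpair_def)
  have Z: "E i ** As ** E j = 0 \<longleftrightarrow> E j ** As ** E i = 0"
    if i: "i < CARD('n)" and j: "j < CARD('n)" for i j
  proof -
    have "a.coord i (As *v u j) = 0 \<longleftrightarrow> a.coord j (As *v u i) = 0"
    proof (rule core[OF _ _ i j])
      fix i j :: nat assume ij: "i < CARD('n)" "j < CARD('n)"
      show "(i > j+1 \<or> j > i+1) \<Longrightarrow> b.coord i (A *v v j) = 0"
        using low up ij b.zero_iff[OF ij, of A] unfolding lower_cond_def upper_cond_def by auto
      show "(i = j+1 \<or> j = i+1) \<Longrightarrow> b.coord i (A *v v j) \<noteq> 0"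
        using low up ij b.zero_iff[OF ij, of A] unfolding lower_cond_def upper_cond_def by auto
    qed
    then show ?thesis using a.zero_iff[OF i j] a.zero_iff[OF j i] by simp
  qed
  show ?thesis
  proof
    assume L: "lower_cond E As"
    show "upper_cond E As" unfolding upper_cond_def
    proof (intro allI impI conjI)
      fix i j assume ij: "i < CARD('n)" "j < CARD('n)"
      show "j > i + 1 \<Longrightarrow> E i ** As ** E j = 0" using L ij Z[OF ij] unfolding lower_cond_def by auto
      show "j = i + 1 \<Longrightarrow> E i ** As ** E j \<noteq> 0" using L ij Z[OF ij] unfolding lower_cond_def by auto
    qed
  next
    assume U: "upper_cond E As"
    show "lower_cond E As" unfolding lower_cond_def
    proof (intro allI impI conjI)
      fix i j assume ij: "i < CARD('n)" "j < CARD('n)"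
      show "i > j + 1 \<Longrightarrow> E i ** As ** E j = 0" using U ij Z[OF ij] unfolding upper_cond_def by auto
      show "i = j + 1 \<Longrightarrow> E i ** As ** E j \<noteq> 0" using U ij Z[OF ij] unfolding upper_cond_def by auto
    qed
  qed
qed

theorem lemma5p7:
  fixes A As :: "('a::field)^'n^'n"
    and E Es :: "nat \<Rightarrow> 'a^'n^'n"
  assumes "multiplicity_free A" and "multiplicity_free As"
    and "idem_ordering A E" and "idem_ordering As Es"
    and "card {k \<in> {1::nat..4}.
            (k = 1 \<and> lower_cond Es A) \<or> (k = 2 \<and> upper_cond Es A) \<or>
            (k = 3 \<and> lower_cond E As) \<or> (k = 4 \<and> upper_cond E As)} \<ge> 3"
  shows "lower_cond Es A \<and> upper_cond Es A \<and> lower_cond E As \<and> upper_cond E As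
         \<and> leonard_system A As E Es"
proof -
  define K where "K = {k \<in> {1::nat..4}.
            (k = 1 \<and> lower_cond Es A) \<or> (k = 2 \<and> upper_cond Es A) \<or>
            (k = 3 \<and> lower_cond E As) \<or> (k = 4 \<and> upper_cond E As)}"
  have cK: "card K \<ge> 3" using assms(5) unfolding K_def .
  have small: "K \<subseteq> {x, y} \<Longrightarrow> False" for x y
  proof -
    assume "K \<subseteq> {x, y}"
    then have "card K \<le> card {x, y}" by (intro card_mono) auto
    also have "\<dots> \<le> 2" by (simp add: card_insert_if)
    finally show False using cK by simp
  qed
  have all: "lower_cond Es A \<and> upper_cond Es A \<and> lower_cond E As \<and> upper_cond E As"
  proof (cases "lower_cond Es A \<and> upper_cond Es A")
    case True
    then have eq: "lower_cond E As \<longleftrightarrow> upper_cond E As"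
      using sym_cond[OF assms(3,4)] by blast
    have "lower_cond E As \<or> upper_cond E As"
      using small[of 1 2] unfolding K_def by auto
    then show ?thesis using True eq by blast
  next
    case False
    then have "\<not> (lower_cond Es A \<and> upper_cond Es A)" .
    moreover have "lower_cond E As \<and> upper_cond E As"
    proof (rule ccontr)
      assume "\<not> (lower_cond E As \<and> upper_cond E As)"
      then consider "\<not> lower_cond Es A" "\<not> lower_cond E As" | "\<not> lower_cond Es A" "\<not> upper_cond E As"
        | "\<not> upper_cond Es A" "\<not> lower_cond E As" | "\<not> upper_cond Es A" "\<not> upper_cond E As"
        using False by blast
      then show False
      proof cases
        case 1 then show False using small[of 2 4] unfolding K_def by auto
      next
        case 2 then show False using small[of 2 3] unfolding K_def by auto
      next
        case 3 then show False using small[of 1 4] unfolding K_def by auto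
      next
        case 4 then show False using small[of 1 3] unfolding K_def by auto
      qed
    qed
    moreover have "lower_cond Es A \<longleftrightarrow> upper_cond Es A"
      using sym_cond[OF assms(4,3)] calculation(2) by blast
    moreover have "lower_cond Es A \<or> upper_cond Es A"
      using small[of 3 4] unfolding K_def by auto
    ultimately show ?thesis by blast
  qed
  have "leonard_system A As E Es"
    unfolding leonard_system_def
    using all assms(1-4) unfolding lower_cond_def upper_cond_def by auto
  then show ?thesis using all by blast
qed

end
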